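(* Let $Y$ be a real Hilbert space, let $Q\colon Y\to Y$ be a bounded linear operator, let $\lambda>0$, and suppose that $\langle y, Qy\rangle+\lambda\|y\|^2\le 0$ for all $y\in Y$. Then $Q$ touches every maximally monotone multifunction on $Y$; that is, for every maximally monotone $M\colon Y\rightrightarrows Y$, the set $G(M)\cap G(Q)$ is a singleton in $Y\times Y$.
   Context: For a multifunction (or function) $M$ on $Y$, $G(M)=\{(y,q)\in Y\times Y: q\in My\}$ denotes its graph. Two multifunctions $M,Q$ on $Y$ are said to touch if $G(M)\cap G(Q)$ is a singleton. *)

theory Defs
  imports "HOL-Analysis.Analysis"
begin

text \<open>Multifunctions on Y are modelled as set-valued maps 'a \<Rightarrow> 'a set.
  A real Hilbert space is a type of class real_inner and complete_space.\<close>

definition graph :: "('a \<Rightarrow> 'a set) \<Rightarrow> ('a \<times> 'a) set" where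
  "graph M = {(y, q). q \<in> M y}"

definition monotone_set :: "('a::real_inner \<times> 'a) set \<Rightarrow> bool" where
  "monotone_set G \<longleftrightarrow>
     (\<forall>(x, u) \<in> G. \<forall>(y, v) \<in> G. (x - y) \<bullet> (u - v) \<ge> 0)"

definition monotone_mf :: "('a::real_inner \<Rightarrow> 'a set) \<Rightarrow> bool" where
  "monotone_mf M \<longleftrightarrow> monotone_set (graph M)"

definition maximally_monotone :: "('a::real_inner \<Rightarrow> 'a set) \<Rightarrow> bool" where
  "maximally_monotone M \<longleftrightarrow> monotone_mf M \<and>
     (\<forall>N. monotone_mf N \<and> graph M \<subseteq> graph N \<longrightarrow> graph N = graph M)"

end

theory Submission
  imports Defs
begin

lemma small_t_nonneg:
  fixes a b :: real
  assumes "\<And>t. 0 < t \<Longrightarrow> t \<le> 1 \<Longrightarrow> 0 \<le> a + t * b"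
  shows "0 \<le> a"
proof (rule ccontr)
  assume "\<not> 0 \<le> a"
  hence a: "a < 0" by simp
  show False
  proof (cases "b \<le> 0")
    case True
    then show False using assms[of 1] a by simp
  next
    case False
    define t where "t = min 1 (-a/(2*b))"
    have t0: "0 < t" using a False by (simp add: t_def field_simps)
    have t1: "t \<le> 1" by (simp add: t_def)
    have "t * b \<le> (-a/(2*b)) * b" using False by (intro mult_right_mono) (auto simp: t_def)
    also have "\<dots> = -a/2" using False by (simp add: field_simps)
    finally have "a + t*b < 0" using a by simp
    then show False using assms[OF t0 t1] by simp
  qed
qed

lemma parallelogram_half:
  fixes a b :: "'a::real_inner"
  shows "(norm ((1/2) *\<^sub>R a + (1/2) *\<^sub>R b))\<^sup>2 = ((norm a)\<^sup>2 + (norm b)\<^sup>2)/2 - (norm (a - b))\<^sup>2/4"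
  unfolding power2_norm_eq_inner
  by (simp add: inner_add inner_diff inner_commute algebra_simps field_simps)

lemma norm_seg:
  fixes a b :: "'a::real_inner"
  shows "(norm ((1-t) *\<^sub>R a + t *\<^sub>R b))\<^sup>2 = (norm a)\<^sup>2 + 2*t*(a \<bullet> (b - a)) + t\<^sup>2 * (norm (b - a))\<^sup>2"
  unfolding power2_norm_eq_inner
  by (simp add: inner_add inner_diff inner_commute algebra_simps power2_eq_square)

lemma core:
  fixes S :: "('a::{real_inner,complete_space} \<times> 'a) set"
  assumes mono: "\<And>x u y v. (x,u)\<in>S \<Longrightarrow> (y,v)\<in>S \<Longrightarrow> (x-y) \<bullet> (u-v) \<ge> 0"
    and maxi: "\<And>x u. (\<And>y v. (y,v)\<in>S \<Longrightarrow> (x-y) \<bullet> (u-v) \<ge> 0) \<Longrightarrow> (x,u)\<in>S"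
  shows "\<exists>x u. (x,u)\<in>S \<and> x + u = 0"
proof -
  define \<phi> where "\<phi> z p = fst z \<bullet> snd p + fst p \<bullet> snd z - fst p \<bullet> snd p" for z p :: "'a\<times>'a"
  define D where "D z = bdd_above (\<phi> z ` S)" for z
  define F where "F z = Sup (\<phi> z ` S)" for z
  define g where "g z = F z + (norm z)\<^sup>2/2" for z
  have ne: "S \<noteq> {}"
  proof
    assume "S = {}"
    then have "(0,0) \<in> S" by (intro maxi) auto
    then show False using \<open>S = {}\<close> by simp
  qed
  have upper: "\<phi> z p \<le> F z" if "D z" "p \<in> S" for z p
    using that unfolding D_def F_def by (intro cSup_upper) auto
  have least: "D z \<and> F z \<le> c" if "\<And>p. p\<in>S \<Longrightarrow> \<phi> z p \<le> c" for z c
  proof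
    show "D z" unfolding D_def using that by (intro bdd_aboveI2) auto
    show "F z \<le> c" unfolding F_def using that ne by (intro cSup_least) auto
  qed
  have onS: "D p \<and> F p \<le> fst p \<bullet> snd p" if "p \<in> S" for p
  proof (rule least)
    fix q assume "q \<in> S"
    have "(fst p - fst q) \<bullet> (snd p - snd q) \<ge> 0"
      using mono[of "fst p" "snd p" "fst q" "snd q"] \<open>p\<in>S\<close> \<open>q\<in>S\<close> by simp
    then show "\<phi> p q \<le> fst p \<bullet> snd p"
      unfolding \<phi>_def by (simp add: inner_diff inner_commute algebra_simps)
  qed
  have geq: "F z \<ge> fst z \<bullet> snd z" if "D z" for z
  proof (cases "z \<in> S")
    case True
    then have "\<phi> z z \<le> F z" using upper that by blast
    then show ?thesis unfolding \<phi>_def by simp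
  next
    case False
    then obtain y v where yv: "(y,v)\<in>S" "\<not> (fst z - y) \<bullet> (snd z - v) \<ge> 0"
      using maxi[of "fst z" "snd z"] by auto
    then have "\<phi> z (y,v) \<le> F z" using upper that by blast
    then show ?thesis using yv(2) unfolding \<phi>_def
      by (simp add: inner_diff inner_commute algebra_simps)
  qed
  have conv: "D ((1-t) *\<^sub>R a + t *\<^sub>R b) \<and> F ((1-t) *\<^sub>R a + t *\<^sub>R b) \<le> (1-t) * F a + t * F b"
    if "D a" "D b" "0 \<le> t" "t \<le> 1" for a b t
  proof (rule least)
    fix p assume "p \<in> S"
    have e: "\<phi> ((1-t) *\<^sub>R a + t *\<^sub>R b) p = (1-t) * \<phi> a p + t * \<phi> b p"
      unfolding \<phi>_def by (simp add: inner_add inner_scaleR_left inner_scaleR_right algebra_simps)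
    have "(1-t) * \<phi> a p \<le> (1-t) * F a" using upper[OF that(1) \<open>p\<in>S\<close>] that by (intro mult_left_mono) auto
    moreover have "t * \<phi> b p \<le> t * F b" using upper[OF that(2) \<open>p\<in>S\<close>] that by (intro mult_left_mono) auto
    ultimately show "\<phi> ((1-t) *\<^sub>R a + t *\<^sub>R b) p \<le> (1-t) * F a + t * F b" unfolding e by simp
  qed
  have normsq: "(norm z)\<^sup>2 = (norm (fst z))\<^sup>2 + (norm (snd z))\<^sup>2" for z :: "'a \<times> 'a"
    by (cases z) (simp add: power2_norm_eq_inner)
  have gpos: "g z \<ge> 0" if "D z" for z
  proof -
    have "0 \<le> (norm (fst z + snd z))\<^sup>2/2" by simp
    also have "\<dots> = fst z \<bullet> snd z + (norm z)\<^sup>2/2"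
      unfolding normsq power2_norm_eq_inner by (simp add: inner_add inner_commute algebra_simps)
    also have "\<dots> \<le> g z" using geq[OF that] unfolding g_def by simp
    finally show ?thesis .
  qed
  define m where "m = Inf (g ` {z. D z})"
  have bdd: "bdd_below (g ` {z. D z})" using gpos by (intro bdd_belowI2[of _ 0]) auto
  have Dne: "{z. D z} \<noteq> {}" using ne onS by blast
  have m_le: "m \<le> g z" if "D z" for z
    unfolding m_def using that bdd by (intro cInf_lower) auto
  have m_ex: "\<exists>z. D z \<and> g z < m + e" if "e > 0" for e
  proof -
    have "Inf (g ` {z. D z}) < m + e" using that m_def by simp
    then obtain w where "w \<in> g ` {z. D z}" "w < m + e"
      using Dne by (subst (asm) cInf_less_iff) (auto simp: bdd)
    then show ?thesis by auto
  qed
  have "\<forall>n. \<exists>z. D z \<and> g z < m + inverse (real (Suc n))"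
    using m_ex by simp
  then obtain zs where zs: "\<And>n. D (zs n)" "\<And>n. g (zs n) < m + inverse (real (Suc n))"
    by metis
  have key: "(norm (a - b))\<^sup>2/8 \<le> (g a + g b)/2 - m" if "D a" "D b" for a b
  proof -
    have c: "D ((1-1/2) *\<^sub>R a + (1/2) *\<^sub>R b) \<and> F ((1-1/2) *\<^sub>R a + (1/2) *\<^sub>R b) \<le> (1-1/2) * F a + (1/2) * F b"
      using conv[OF that, of "1/2"] by simp
    have "m \<le> g ((1/2) *\<^sub>R a + (1/2) *\<^sub>R b)" using c m_le by simp
    also have "\<dots> \<le> (F a + F b)/2 + (norm ((1/2) *\<^sub>R a + (1/2) *\<^sub>R b))\<^sup>2/2"
      using c unfolding g_def by simp
    also have "\<dots> = (g a + g b)/2 - (norm (a - b))\<^sup>2/8"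
      unfolding parallelogram_half g_def by (simp add: field_simps)
    finally show ?thesis by linarith
  qed
  have "Cauchy zs"
  proof (rule CauchyI)
    fix e :: real assume "e > 0"
    obtain N where N: "8 / e\<^sup>2 < real N" using reals_Archimedean2 by blast
    have "\<forall>i\<ge>N. \<forall>j\<ge>N. norm (zs i - zs j) < e"
    proof (intro allI impI)
      fix i j assume ij: "N \<le> i" "N \<le> j"
      have "(norm (zs i - zs j))\<^sup>2/8 \<le> (g (zs i) + g (zs j))/2 - m" using key zs by blast
      also have "\<dots> < (inverse (real (Suc i)) + inverse (real (Suc j)))/2"
      proof -
        have *: "\<And>A B a b::real. A < m + a \<Longrightarrow> B < m + b \<Longrightarrow> (A + B)/2 - m < (a + b)/2"
          by (simp add: field_simps)
        show ?thesis by (rule *[OF zs(2)[of i] zs(2)[of j]])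
      qed
      also have "\<dots> \<le> inverse (real (Suc N))"
      proof -
        have "inverse (real (Suc i)) \<le> inverse (real (Suc N))" using ij by (simp add: field_simps)
        moreover have "inverse (real (Suc j)) \<le> inverse (real (Suc N))" using ij by (simp add: field_simps)
        moreover have "\<And>a b c::real. a \<le> c \<Longrightarrow> b \<le> c \<Longrightarrow> (a+b)/2 \<le> c" by simp
        ultimately show ?thesis by blast
      qed
      finally have "(norm (zs i - zs j))\<^sup>2 < 8 * inverse (real (Suc N))" by simp
      also have "\<dots> < e\<^sup>2"
      proof -
        have "8 / e\<^sup>2 < real (Suc N)" using N by simp
        then have "8 < e\<^sup>2 * real (Suc N)" using \<open>e>0\<close> by (simp add: field_simps)
        then show ?thesis by (simp add: field_simps)
      qed
      finally show "norm (zs i - zs j) < e" using \<open>e>0\<close>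
        by (meson norm_ge_zero power_less_imp_less_base less_imp_le)
    qed
    then show "\<exists>M. \<forall>m\<ge>M. \<forall>n\<ge>M. norm (zs m - zs n) < e" by blast
  qed
  then obtain z0 where lim: "zs \<longlonglongrightarrow> z0" using Cauchy_convergent_iff convergent_def by blast
  have glim: "(\<lambda>n. g (zs n)) \<longlonglongrightarrow> m"
  proof (rule tendsto_sandwich[of "\<lambda>n. m" _ _ "\<lambda>n. m + inverse (real (Suc n))"])
    show "\<forall>\<^sub>F n in sequentially. m \<le> g (zs n)" using m_le zs by simp
    show "\<forall>\<^sub>F n in sequentially. g (zs n) \<le> m + inverse (real (Suc n))" using zs(2) by (simp add: less_imp_le)
    show "(\<lambda>n. m) \<longlonglongrightarrow> m" by simp
    show "(\<lambda>n. m + inverse (real (Suc n))) \<longlonglongrightarrow> m"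
      using tendsto_add[OF tendsto_const LIMSEQ_inverse_real_of_nat, of m] by simp
  qed
  have Flim: "(\<lambda>n. F (zs n)) \<longlonglongrightarrow> m - (norm z0)\<^sup>2/2"
  proof -
    have "(\<lambda>n. g (zs n) - (norm (zs n))\<^sup>2/2) \<longlonglongrightarrow> m - (norm z0)\<^sup>2/2"
      by (intro tendsto_intros glim lim) simp
    then show ?thesis unfolding g_def by simp
  qed
  have z0: "D z0 \<and> F z0 \<le> m - (norm z0)\<^sup>2/2"
  proof (rule least)
    fix p assume "p \<in> S"
    have "(\<lambda>n. \<phi> (zs n) p) \<longlonglongrightarrow> \<phi> z0 p"
      unfolding \<phi>_def by (intro tendsto_intros lim)
    then show "\<phi> z0 p \<le> m - (norm z0)\<^sup>2/2"
      using Flim upper[OF zs(1) \<open>p\<in>S\<close>] by (intro LIMSEQ_le) auto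
  qed
  have gz0: "g z0 = m" using z0 m_le[of z0] unfolding g_def by simp
  define x0 where "x0 = fst z0"
  define u0 where "u0 = snd z0"
  have sub: "0 \<le> fst p \<bullet> snd p - F z0 + z0 \<bullet> (p - z0)" if "p \<in> S" for p
  proof (rule small_t_nonneg[where b = "(norm (p - z0))\<^sup>2/2"])
    fix t :: real assume t: "0 < t" "t \<le> 1"
    have c: "D ((1-t) *\<^sub>R z0 + t *\<^sub>R p) \<and> F ((1-t) *\<^sub>R z0 + t *\<^sub>R p) \<le> (1-t) * F z0 + t * F p"
      using conv[of z0 p t] z0 onS[OF that] t by simp
    have "F z0 + (norm z0)\<^sup>2/2 \<le> g ((1-t) *\<^sub>R z0 + t *\<^sub>R p)" using gz0 m_le c unfolding g_def by simp
    also have "\<dots> \<le> (1-t) * F z0 + t * (fst p \<bullet> snd p) + (norm ((1-t) *\<^sub>R z0 + t *\<^sub>R p))\<^sup>2/2"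
      using c onS[OF that] t unfolding g_def by (smt (verit) mult_left_mono)
    finally have "0 \<le> t * (fst p \<bullet> snd p - F z0 + z0 \<bullet> (p - z0) + t * ((norm (p - z0))\<^sup>2/2))"
      unfolding norm_seg inner_diff_right by (simp add: field_simps power2_eq_square)
    then show "0 \<le> fst p \<bullet> snd p - F z0 + z0 \<bullet> (p - z0) + t * ((norm (p - z0))\<^sup>2/2)"
      using t by (simp add: zero_le_mult_iff)
  qed
  have rel: "((-u0) - y) \<bullet> ((-x0) - v) \<ge> (x0 + u0) \<bullet> (x0 + u0)" if "(y,v) \<in> S" for y v
  proof -
    have "0 \<le> y \<bullet> v - F z0 + z0 \<bullet> ((y,v) - z0)" using sub[OF that] by simp
    moreover have "F z0 \<ge> x0 \<bullet> u0" using geq z0 unfolding x0_def u0_def by simp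
    moreover have "z0 = (x0, u0)" unfolding x0_def u0_def by simp
    ultimately have "0 \<le> y \<bullet> v - x0 \<bullet> u0 + x0 \<bullet> (y - x0) + u0 \<bullet> (v - u0)" by simp
    then show ?thesis by (simp add: inner_add inner_diff inner_commute algebra_simps)
  qed
  have inS: "(-u0, -x0) \<in> S"
  proof (rule maxi)
    fix y v assume "(y,v) \<in> S"
    have "0 \<le> (x0 + u0) \<bullet> (x0 + u0)" by simp
    then show "0 \<le> ((-u0) - y) \<bullet> ((-x0) - v)" using rel[OF \<open>(y,v)\<in>S\<close>] by linarith
  qed
  have "(x0 + u0) \<bullet> (x0 + u0) \<le> 0" using rel[OF inS] by simp
  then have "x0 + u0 = 0" by (metis inner_ge_zero inner_eq_zero_iff order_antisym)
  then have "-u0 + -x0 = 0" by (metis add.commute minus_add_distrib neg_0_equal_iff_equal)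
  then show ?thesis using inS by blast
qed

lemma mm_pointwise:
  assumes "maximally_monotone M"
  shows "\<And>x u y v. (x,u)\<in>graph M \<Longrightarrow> (y,v)\<in>graph M \<Longrightarrow> (x-y) \<bullet> (u-v) \<ge> 0"
    and "\<And>x u. (\<And>y v. (y,v)\<in>graph M \<Longrightarrow> (x-y) \<bullet> (u-v) \<ge> 0) \<Longrightarrow> (x,u)\<in>graph M"
proof -
  have mono: "monotone_set (graph M)" using assms unfolding maximally_monotone_def monotone_mf_def by simp
  show "\<And>x u y v. (x,u)\<in>graph M \<Longrightarrow> (y,v)\<in>graph M \<Longrightarrow> (x-y) \<bullet> (u-v) \<ge> 0"
    using mono unfolding monotone_set_def by blast
  fix x u assume rel: "\<And>y v. (y,v)\<in>graph M \<Longrightarrow> (x-y) \<bullet> (u-v) \<ge> 0"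
  define N where "N = (\<lambda>y. {q. (y,q) \<in> graph M \<union> {(x,u)}})"
  have gN: "graph N = graph M \<union> {(x,u)}" unfolding N_def graph_def by auto
  have "monotone_set (graph N)"
    unfolding monotone_set_def gN
  proof (intro ballI, clarify)
    fix a b c d assume ab: "(a,b) \<in> graph M \<union> {(x,u)}" and cd: "(c,d) \<in> graph M \<union> {(x,u)}"
    have sym: "(c - a) \<bullet> (d - b) = (a - c) \<bullet> (b - d)"
      by (metis inner_minus_left inner_minus_right minus_diff_eq minus_minus)
    show "0 \<le> (a - c) \<bullet> (b - d)"
      using ab cd mono rel[of c d] rel[of a b] sym unfolding monotone_set_def by auto
  qed
  moreover have all: "\<And>N. monotone_set (graph N) \<Longrightarrow> graph M \<subseteq> graph N \<Longrightarrow> graph N = graph M"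
    using assms unfolding maximally_monotone_def monotone_mf_def by blast
  moreover have "graph M \<subseteq> graph N" unfolding gN by blast
  ultimately have eq: "graph N = graph M" by blast
  have "(x,u) \<in> graph N" unfolding gN by blast
  then show "(x,u) \<in> graph M" unfolding eq .
qed

lemma resolvent_exists:
  fixes S :: "('a::{real_inner,complete_space} \<times> 'a) set"
  assumes mono: "\<And>x u y v. (x,u)\<in>S \<Longrightarrow> (y,v)\<in>S \<Longrightarrow> (x-y) \<bullet> (u-v) \<ge> 0"
    and maxi: "\<And>x u. (\<And>y v. (y,v)\<in>S \<Longrightarrow> (x-y) \<bullet> (u-v) \<ge> 0) \<Longrightarrow> (x,u)\<in>S"
    and gam: "gam > 0"
  shows "\<exists>y. (y, (1/gam) *\<^sub>R (w - y)) \<in> S"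
proof -
  define S' where "S' = {(x - w, gam *\<^sub>R u) | x u. (x,u) \<in> S}"
  have mono': "(x-y) \<bullet> (u-v) \<ge> 0" if h: "(x,u)\<in>S'" "(y,v)\<in>S'" for x u y v
  proof -
    obtain a b where ab: "(a,b)\<in>S" "x = a - w" "u = gam *\<^sub>R b" using h(1) unfolding S'_def by auto
    obtain c d where cd: "(c,d)\<in>S" "y = c - w" "v = gam *\<^sub>R d" using h(2) unfolding S'_def by auto
    have "(x-y) \<bullet> (u-v) = gam * ((a-c) \<bullet> (b-d))"
    proof -
      have "x - y = a - c" using ab cd by simp
      moreover have "u - v = gam *\<^sub>R (b - d)" using ab cd by (simp add: scaleR_diff_right)
      ultimately show ?thesis by simp
    qed
    then show ?thesis using mono[OF ab(1) cd(1)] gam by simp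
  qed
  have maxi': "(p,q)\<in>S'" if rel: "\<And>y v. (y,v)\<in>S' \<Longrightarrow> (p-y) \<bullet> (q-v) \<ge> 0" for p q
  proof -
    have "(p + w, (1/gam) *\<^sub>R q) \<in> S"
    proof (rule maxi)
      fix y v assume yv: "(y,v)\<in>S"
      then have "(y - w, gam *\<^sub>R v) \<in> S'" unfolding S'_def by force
      then have "0 \<le> (p - (y - w)) \<bullet> (q - gam *\<^sub>R v)" using rel by blast
      moreover have "(p - (y - w)) \<bullet> (q - gam *\<^sub>R v) = gam * ((p + w - y) \<bullet> ((1/gam) *\<^sub>R q - v))"
        using gam by (simp add: inner_diff inner_add algebra_simps)
      ultimately show "0 \<le> (p + w - y) \<bullet> ((1/gam) *\<^sub>R q - v)" using gam
        by (simp add: zero_le_mult_iff)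
    qed
    moreover have "p = (p + w) - w" "q = gam *\<^sub>R ((1/gam) *\<^sub>R q)" using gam by simp_all
    ultimately show ?thesis unfolding S'_def by blast
  qed
  obtain x' u' where xu: "(x',u')\<in>S'" "x' + u' = 0" using core[of S', OF mono' maxi'] by blast
  then obtain a b where ab: "(a,b)\<in>S" "x' = a - w" "u' = gam *\<^sub>R b" unfolding S'_def by auto
  have "gam *\<^sub>R b = w - a" using xu(2) ab by (simp add: algebra_simps)
  moreover have "b = (1/gam) *\<^sub>R (gam *\<^sub>R b)" using gam by simp
  ultimately have "b = (1/gam) *\<^sub>R (w - a)" by simp
  then show ?thesis using ab(1) by blast
qed

lemma resolvent_nonexp:
  fixes S :: "('a::real_inner \<times> 'a) set"
  assumes mono: "\<And>x u y v. (x,u)\<in>S \<Longrightarrow> (y,v)\<in>S \<Longrightarrow> (x-y) \<bullet> (u-v) \<ge> 0"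
    and gam: "gam > 0"
    and h1: "(y1, (1/gam) *\<^sub>R (w1 - y1)) \<in> S" and h2: "(y2, (1/gam) *\<^sub>R (w2 - y2)) \<in> S"
  shows "norm (y1 - y2) \<le> norm (w1 - w2)"
proof -
  have "0 \<le> (y1 - y2) \<bullet> ((1/gam) *\<^sub>R (w1 - y1) - (1/gam) *\<^sub>R (w2 - y2))" using mono[OF h1 h2] .
  also have "\<dots> = (1/gam) * ((y1 - y2) \<bullet> ((w1 - w2) - (y1 - y2)))"
    by (simp add: inner_diff algebra_simps)
  finally have "0 \<le> (y1 - y2) \<bullet> ((w1 - w2) - (y1 - y2))" using gam by (simp add: zero_le_divide_iff)
  then have "(norm (y1 - y2))\<^sup>2 \<le> (y1 - y2) \<bullet> (w1 - w2)"
    by (simp add: inner_diff_right power2_norm_eq_inner)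
  also have "\<dots> \<le> norm (y1 - y2) * norm (w1 - w2)" by (rule norm_cauchy_schwarz)
  finally have "norm (y1 - y2) * norm (y1 - y2) \<le> norm (y1 - y2) * norm (w1 - w2)"
    by (simp add: power2_eq_square)
  then show ?thesis
  proof (cases "norm (y1 - y2) = 0")
    case False
    then have "norm (y1 - y2) > 0" by simp
    then show ?thesis using \<open>norm (y1 - y2) * norm (y1 - y2) \<le> norm (y1 - y2) * norm (w1 - w2)\<close>
      by (simp add: mult_le_cancel_left_pos)
  qed simp
qed

theorem corollary2p8:
  fixes Q :: "'a::{real_inner, complete_space} \<Rightarrow> 'a" and lam :: real
  assumes "bounded_linear Q"
    and "lam > 0"
    and "\<And>y. y \<bullet> Q y + lam * (norm y)\<^sup>2 \<le> 0"
  shows "\<forall>M. maximally_monotone M \<longrightarrow> (\<exists>p. graph M \<inter> graph (\<lambda>y. {Q y}) = {p})"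
proof (intro allI impI)
  fix M :: "'a \<Rightarrow> 'a set"
  assume mm: "maximally_monotone M"
  note mono = mm_pointwise(1)[OF mm] and maxi = mm_pointwise(2)[OF mm]
  have lin: "Q a - Q b = Q (a - b)" for a b using assms(1) by (simp add: linear_simps)
  have gQ: "graph (\<lambda>y. {Q y}) = {(y, Q y) | y. True}" unfolding graph_def by auto
  have uniq: "y1 = y2" if "(y1, Q y1) \<in> graph M" "(y2, Q y2) \<in> graph M" for y1 y2
  proof -
    have "0 \<le> (y1 - y2) \<bullet> (Q y1 - Q y2)" using mono[OF that] .
    also have "\<dots> = (y1 - y2) \<bullet> Q (y1 - y2)" using lin by simp
    also have "\<dots> \<le> - lam * (norm (y1 - y2))\<^sup>2" using assms(3)[of "y1 - y2"] by simp
    finally have "lam * (norm (y1 - y2))\<^sup>2 \<le> 0" by linarith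
    then have "(norm (y1 - y2))\<^sup>2 \<le> 0" using assms(2) by (simp add: mult_le_0_iff)
    then show ?thesis by simp
  qed
  obtain K where K: "K > 0" "\<And>x. norm (Q x) \<le> norm x * K"
    using bounded_linear.pos_bounded[OF assms(1)] by blast
  define K1 where "K1 = K + lam"
  have K1: "K1 > 0" "lam < K1" "\<And>x. norm (Q x) \<le> norm x * K1"
  proof -
    show "K1 > 0" "lam < K1" using K assms(2) by (auto simp: K1_def)
    fix x show "norm (Q x) \<le> norm x * K1" using K(2)[of x] assms(2)
      unfolding K1_def by (smt (verit) mult_left_mono norm_ge_zero)
  qed
  define gam where "gam = lam / K1\<^sup>2"
  have gam: "gam > 0" using K1 assms(2) by (simp add: gam_def)
  define J where "J w = (SOME y. (y, (1/gam) *\<^sub>R (w - y)) \<in> graph M)" for w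
  have J: "(J w, (1/gam) *\<^sub>R (w - J w)) \<in> graph M" for w
    unfolding J_def using resolvent_exists[OF mono maxi gam, of w] by (rule someI_ex)
  define T where "T y = J (y + gam *\<^sub>R Q y)" for y
  define c where "c = sqrt (1 - lam\<^sup>2 / K1\<^sup>2)"
  have frac: "lam\<^sup>2 / K1\<^sup>2 < 1" "0 < lam\<^sup>2 / K1\<^sup>2" using K1 assms(2)
    by (auto simp: power_strict_mono)
  have c: "0 \<le> c" "c < 1" unfolding c_def using frac by auto
  have contr: "norm (d + gam *\<^sub>R Q d) \<le> c * norm d" for d
  proof -
    have "(norm (d + gam *\<^sub>R Q d))\<^sup>2 = (norm d)\<^sup>2 + 2 * gam * (d \<bullet> Q d) + gam\<^sup>2 * (norm (Q d))\<^sup>2"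
      unfolding power2_norm_eq_inner by (simp add: inner_add inner_commute algebra_simps power2_eq_square)
    also have "\<dots> \<le> (norm d)\<^sup>2 + 2 * gam * (- lam * (norm d)\<^sup>2) + gam\<^sup>2 * (norm d * K1)\<^sup>2"
    proof -
      have "2 * gam * (d \<bullet> Q d) \<le> 2 * gam * (- lam * (norm d)\<^sup>2)"
        using assms(3)[of d] gam by (intro mult_left_mono) auto
      moreover have "gam\<^sup>2 * (norm (Q d))\<^sup>2 \<le> gam\<^sup>2 * (norm d * K1)\<^sup>2"
        using K1(3)[of d] by (intro mult_left_mono power_mono) auto
      ultimately show ?thesis by linarith
    qed
    also have "\<dots> = (1 - lam\<^sup>2 / K1\<^sup>2) * (norm d)\<^sup>2"
      using K1 unfolding gam_def by (simp add: field_simps power2_eq_square)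
    also have "\<dots> = (c * norm d)\<^sup>2" unfolding c_def using frac
      by (simp add: power_mult_distrib)
    finally show ?thesis using c by (meson power2_le_imp_le mult_nonneg_nonneg norm_ge_zero)
  qed
  have "\<forall>x y. dist (T x) (T y) \<le> c * dist x y"
  proof (intro allI)
    fix x y
    have "dist (T x) (T y) \<le> norm ((x + gam *\<^sub>R Q x) - (y + gam *\<^sub>R Q y))"
      unfolding dist_norm T_def by (rule resolvent_nonexp[OF mono gam J J])
    also have "(x + gam *\<^sub>R Q x) - (y + gam *\<^sub>R Q y) = (x - y) + gam *\<^sub>R Q (x - y)"
    proof -
      have "(x + gam *\<^sub>R Q x) - (y + gam *\<^sub>R Q y) = (x - y) + gam *\<^sub>R (Q x - Q y)"
        by (simp add: algebra_simps)
      then show ?thesis using lin[of x y] by simp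
    qed
    finally show "dist (T x) (T y) \<le> c * dist x y" using contr[of "x - y"] by (simp add: dist_norm)
  qed
  then obtain y where fp: "T y = y" using banach_fix_type[OF c] by blast
  have "(y, Q y) \<in> graph M"
  proof -
    have "(T y, (1/gam) *\<^sub>R ((y + gam *\<^sub>R Q y) - T y)) \<in> graph M" using J unfolding T_def by simp
    then show ?thesis using fp gam by simp
  qed
  then have "graph M \<inter> graph (\<lambda>y. {Q y}) = {(y, Q y)}" using uniq unfolding gQ by blast
  then show "\<exists>p. graph M \<inter> graph (\<lambda>y. {Q y}) = {p}" by blast
qed

end
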